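(* Consider the problem $\min_{x\in\mathbb{R}^n} F(x):=f(x)+g(x)$ subject to $Ax=b$, under the setting described in the context, and let $\lambda^*$ be an optimal solution of $\max_{\lambda\in\mathbb{R}^m} d(\lambda)$. Let $\{\lambda^k\}$ be generated by the IAL framework described in the context, where the tolerance sequence $\{\eta_k\}$ is positive, nonincreasing, and satisfies $\sum_{k=1}^{+\infty}\eta_k<+\infty$. Let $\delta_k:=d(\lambda^* )-d(\lambda^k)$, $$B:=\sqrt{\|\lambda^1-\lambda^*\|^2+2\beta\sum_{k=1}^{+\infty}\eta_k},\qquad \theta:=\frac{\beta}{4B^2},$$ and let $k_0\ge 4$ be an integer such that $$\max_{k\ge k_0}\delta_k\le\frac{1}{2\theta}\quad\text{and}\quad\max_{k\ge k_0}\eta_k\le\frac{1}{24\theta}.$$ Suppose moreover that $$\sqrt{\frac{\eta_{k+1}}{\eta_k}}\ge\frac{k-2}{k},\qquad k=k_0,k_0+1,\dots.$$ Define $\tau_1:=\frac{k_0}{4\theta}$ and $\tau_2:=\frac{1}{4\theta\sqrt{\eta_{k_0}}}$. Then $$\delta_k\le\frac{\tau_1}{k}+\tau_2\sqrt{\eta_k},\qquad k=k_0,k_0+1,\dots.$$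
   Context: Let $A\in\mathbb{R}^{m\times n}$ and $b\in\mathbb{R}^m$. Let $f:\mathbb{R}^n\to\mathbb{R}$ be convex and differentiable with Lipschitz continuous gradient. Let $g:\mathbb{R}^n\to\mathbb{R}\cup\{+\infty\}$ be a closed proper convex (possibly nonsmooth) function with bounded domain. Fix a penalty parameter $\beta>0$. For $\lambda\in\mathbb{R}^m$, define $$\hat f_\beta(x;\lambda):=f(x)+\langle\lambda,Ax-b\rangle+\tfrac{\beta}{2}\|Ax-b\|^2,\qquad \mathcal{L}_\beta(x;\lambda):=\hat f_\beta(x;\lambda)+g(x),$$ and $d(\lambda):=\min_{x\in\mathbb{R}^n}\mathcal{L}_\beta(x;\lambda)$. Here $\nabla\hat f_\beta(x;\lambda)$ denotes the gradient of $\hat f_\beta$ with respect to $x$. IAL framework: choose $x^1\in\operatorname{dom} g$, $\lambda^1\in\mathbb{R}^m$, and a nonnegative sequence $\{\eta_k\}$. For $k=1,2,\dots$: find a point $x^{k+1}$ such that $$\max_{x\in\mathbb{R}^n}\Big\{\langle\nabla\hat f_\beta(x^{k+1};\lambda^k),\,x^{k+1}-x\rangle+g(x^{k+1})-g(x)\Big\}\le\eta_k,$$ and then set $\lambda^{k+1}=\lambda^k+\beta(Ax^{k+1}-b)$. *)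

theory Defs
  imports "HOL-Analysis.Analysis"
begin

definition grad :: "('a::real_inner \<Rightarrow> real) \<Rightarrow> 'a \<Rightarrow> 'a" where
  "grad F x = (THE D. GDERIV F x :> D)"

definition dom_e :: "('a \<Rightarrow> ereal) \<Rightarrow> 'a set" where
  "dom_e g = {x. g x < \<infinity>}"

definition epi :: "('a \<Rightarrow> ereal) \<Rightarrow> ('a \<times> real) set" where
  "epi g = {(x, t). g x \<le> ereal t}"

definition proper_fun :: "('a \<Rightarrow> ereal) \<Rightarrow> bool" where
  "proper_fun g \<longleftrightarrow> (\<forall>x. g x \<noteq> -\<infinity>) \<and> (\<exists>x. g x < \<infinity>)"

definition convex_fun :: "('a::real_vector \<Rightarrow> ereal) \<Rightarrow> bool" where
  "convex_fun g \<longleftrightarrow> convex (epi g)"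

definition closed_fun :: "('a::topological_space \<Rightarrow> ereal) \<Rightarrow> bool" where
  "closed_fun g \<longleftrightarrow> closed (epi g)"

definition fhat :: "(real^'n \<Rightarrow> real) \<Rightarrow> real^'n^'m \<Rightarrow> real^'m \<Rightarrow> real
    \<Rightarrow> real^'m \<Rightarrow> real^'n \<Rightarrow> real" where
  "fhat f A b \<beta> lam x = f x + inner lam (A *v x - b) + \<beta> / 2 * (norm (A *v x - b))\<^sup>2"

definition AL :: "(real^'n \<Rightarrow> real) \<Rightarrow> (real^'n \<Rightarrow> ereal) \<Rightarrow> real^'n^'m \<Rightarrow> real^'m \<Rightarrow> real
    \<Rightarrow> real^'m \<Rightarrow> real^'n \<Rightarrow> ereal" where
  "AL f g A b \<beta> lam x = ereal (fhat f A b \<beta> lam x) + g x"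

text \<open>Dual function d(lam) = min_x L_beta(x;lam) (finite and attained under the standing
  assumptions; we take the infimum and read it as a real number).\<close>
definition dualf :: "(real^'n \<Rightarrow> real) \<Rightarrow> (real^'n \<Rightarrow> ereal) \<Rightarrow> real^'n^'m \<Rightarrow> real^'m \<Rightarrow> real
    \<Rightarrow> real^'m \<Rightarrow> real" where
  "dualf f g A b \<beta> lam = real_of_ereal (INF x. AL f g A b \<beta> lam x)"

end

theory Submission
  imports Defs
begin

lemma gderiv_grad:
  fixes F :: "'a::euclidean_space \<Rightarrow> real"
  assumes "F differentiable (at x)"
  shows "GDERIV F x :> grad F x"
proof -
  from assms obtain F' where d: "(F has_derivative F') (at x)" unfolding differentiable_def by blast
  then have lin: "linear F'" using has_derivative_linear by blast
  define D where "D = (\<Sum>b\<in>Basis. F' b *\<^sub>R b)"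
  have "F' h = inner h D" for h
  proof -
    have "F' h = F' (\<Sum>b\<in>Basis. inner h b *\<^sub>R b)" by (simp add: euclidean_representation)
    also have "\<dots> = (\<Sum>b\<in>Basis. inner h b * F' b)"
      using lin by (simp add: linear_sum linear_cmul)
    also have "\<dots> = inner h D" unfolding D_def by (simp add: inner_sum_right mult.commute)
    finally show ?thesis .
  qed
  then have g: "GDERIV F x :> D" unfolding gderiv_def using d by (metis ext)
  have uniq: "D' = D" if "GDERIV F x :> D'" for D'
  proof -
    note that
    then have "(\<lambda>h. inner h D') = (\<lambda>h. inner h D)" using g unfolding gderiv_def
      using has_derivative_unique by blast
    then have "inner (D' - D) (D' - D) = 0" by (metis inner_diff_left inner_diff_right diff_self)
    then show "D' = D" by simp
  qed
  have "grad F x = D" unfolding grad_def using g uniq by (rule the_equality[where P="\<lambda>D. GDERIV F x :> D"])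
  then show ?thesis using g by simp
qed
lemma convex_grad_ineq:
  fixes F :: "'a::euclidean_space \<Rightarrow> real"
  assumes cv: "convex_on UNIV F" and g: "GDERIV F x :> D"
  shows "F z \<ge> F x + inner D (z - x)"
proof -
  define \<phi> where "\<phi> t = F (x + t *\<^sub>R (z - x))" for t :: real
  have "convex_on UNIV \<phi>"
  proof (rule convex_onI)
    fix u s t :: real assume u: "0 < u" "u < 1"
    have "x + ((1 - u) * s + u * t) *\<^sub>R (z - x) = (1 - u) *\<^sub>R (x + s *\<^sub>R (z - x)) + u *\<^sub>R (x + t *\<^sub>R (z - x))"
      by (simp add: algebra_simps)
    then show "\<phi> ((1 - u) *\<^sub>R s + u *\<^sub>R t) \<le> (1 - u) * \<phi> s + u * \<phi> t"
      unfolding \<phi>_def using cv u by (simp add: convex_on_def del: scaleR_add_right)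
  qed simp
  moreover have "(\<phi> has_field_derivative inner (z - x) D) (at 0)"
  proof -
    have "((\<lambda>t. x + t *\<^sub>R (z - x)) has_derivative (\<lambda>t. t *\<^sub>R (z - x))) (at 0)"
      by (auto intro!: derivative_eq_intros)
    moreover have "(F has_derivative (\<lambda>h. inner h D)) (at (x + 0 *\<^sub>R (z - x)))"
      using g by (simp add: gderiv_def)
    ultimately have "(\<phi> has_derivative (\<lambda>t. inner (t *\<^sub>R (z - x)) D)) (at 0)"
      unfolding \<phi>_def using has_derivative_compose[of "\<lambda>t. x + t *\<^sub>R (z - x)"] by blast
    then show ?thesis by (simp add: has_field_derivative_def mult.commute[of _ "inner (z - x) D"])
  qed
  ultimately have "\<phi> 1 - \<phi> 0 \<ge> inner (z - x) D * (1 - 0)"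
    by (intro convex_on_imp_above_tangent[where A=UNIV]) auto
  then show ?thesis unfolding \<phi>_def by (simp add: inner_commute)
qed

lemma grad_eq:
  fixes F :: "'a::euclidean_space \<Rightarrow> real"
  assumes g: "GDERIV F x :> D" shows "grad F x = D"
proof -
  have uniq: "D' = D" if "GDERIV F x :> D'" for D'
  proof -
    note that
    then have "(\<lambda>h. inner h D') = (\<lambda>h. inner h D)" using g unfolding gderiv_def
      using has_derivative_unique by blast
    then have "inner (D' - D) (D' - D) = 0" by (metis inner_diff_left inner_diff_right diff_self)
    then show "D' = D" by simp
  qed
  show "grad F x = D" unfolding grad_def using g uniq by (rule the_equality[where P="\<lambda>D. GDERIV F x :> D"])
qed

lemma fhat_gderiv:
  fixes A :: "real^'n^'m"
  assumes "GDERIV f x :> Df"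
  shows "GDERIV (fhat f A b \<beta> lam) x :> Df + (lam + \<beta> *\<^sub>R (A *v x - b)) v* A"
proof -
  have e: "fhat f A b \<beta> lam = (\<lambda>x. f x + inner lam (A *v x - b) + \<beta> / 2 * inner (A *v x - b) (A *v x - b))"
    by (auto simp: fhat_def power2_norm_eq_inner)
  have bl: "bounded_linear (\<lambda>x. A *v x)" using matrix_vector_mul_bounded_linear[of A] by simp
  have "((\<lambda>x. f x + inner lam (A *v x - b) + \<beta> / 2 * inner (A *v x - b) (A *v x - b)) has_derivative
     (\<lambda>h. inner h Df + inner lam (A *v h) + \<beta> / 2 * (inner (A *v h) (A *v x - b) + inner (A *v x - b) (A *v h)))) (at x)"
    using assms unfolding gderiv_def
    by (auto intro!: derivative_eq_intros bounded_linear.has_derivative[OF bl])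
  moreover have "(\<lambda>h. inner h Df + inner lam (A *v h) + \<beta> / 2 * (inner (A *v h) (A *v x - b) + inner (A *v x - b) (A *v h)))
     = (\<lambda>h. inner h (Df + (lam + \<beta> *\<^sub>R (A *v x - b)) v* A))"
  proof (rule ext)
    fix h
    define V where "V = lam + \<beta> *\<^sub>R (A *v x - b)"
    have 1: "inner h (Df + V v* A) = inner h Df + inner V (A *v h)"
      by (simp add: inner_add_right inner_commute[of h "V v* A"] dot_lmul_matrix)
    show "inner h Df + inner lam (A *v h) + \<beta> / 2 * (inner (A *v h) (A *v x - b) + inner (A *v x - b) (A *v h))
       = inner h (Df + (lam + \<beta> *\<^sub>R (A *v x - b)) v* A)"
      unfolding V_def[symmetric] 1 unfolding V_def
      by (simp add: inner_add_left inner_commute[of "A *v h"] algebra_simps)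
  qed
  ultimately show ?thesis unfolding gderiv_def e by simp
qed


lemma phi_mono:
  fixes w u :: real assumes "0 \<le> w" "w \<le> u" "u \<le> 1"
  shows "w - w^2/2 \<le> u - u^2/2"
proof -
  have "(u - w) * (1 - (u + w)/2) \<ge> 0" using assms by (intro mult_nonneg_nonneg) auto
  moreover have "(u - w) * (1 - (u + w)/2) = (u - u^2/2) - (w - w^2/2)"
    by (simp add: power2_eq_square field_simps)
  ultimately show ?thesis by linarith
qed

lemma rec_step:
  fixes e' \<delta> \<delta>' B \<beta> s \<eta> N :: real
  assumes "\<beta> > 0" "B > 0" "s \<ge> 0" "\<delta> \<ge> 0"
    and h1: "\<delta>' \<le> B * s - \<beta>/2 * s^2 + \<eta>"
    and h2: "\<delta>' \<le> \<delta> - \<beta>/2 * s^2 + \<eta>"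
  shows "\<beta> * \<delta>' / B^2 \<le> min (\<beta> * \<delta> / B^2) 1 - (min (\<beta> * \<delta> / B^2) 1)^2 / 2 + \<beta> * \<eta> / B^2"
proof -
  define e where "e = \<beta> * \<delta> / B^2"
  define e2 where "e2 = \<beta> * \<delta>' / B^2"
  define \<sigma> where "\<sigma> = \<beta> * s / B"
  define h where "h = \<beta> * \<eta> / B^2"
  define w where "w = min e 1"
  have pos: "\<beta> / B^2 > 0" using assms by simp
  have g1: "e2 \<le> \<sigma> - \<sigma>^2/2 + h"
  proof -
    have "\<beta> / B^2 * \<delta>' \<le> \<beta> / B^2 * (B * s - \<beta>/2 * s^2 + \<eta>)"
      using h1 pos by (intro mult_left_mono) auto
    then show ?thesis unfolding e2_def \<sigma>_def h_def using assms
      by (simp add: field_simps power2_eq_square)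
  qed
  have g2: "e2 \<le> e - \<sigma>^2/2 + h"
  proof -
    have "\<beta> / B^2 * \<delta>' \<le> \<beta> / B^2 * (\<delta> - \<beta>/2 * s^2 + \<eta>)"
      using h2 pos by (intro mult_left_mono) auto
    then show ?thesis unfolding e2_def \<sigma>_def h_def e_def using assms
      by (simp add: field_simps power2_eq_square)
  qed
  have e0: "e \<ge> 0" "\<sigma> \<ge> 0" unfolding e_def \<sigma>_def using assms by auto
  have "e2 \<le> w - w^2/2 + h"
  proof (cases "\<sigma> \<le> w")
    case True
    then have "\<sigma> - \<sigma>^2/2 \<le> w - w^2/2" using e0 by (intro phi_mono) (auto simp: w_def)
    then show ?thesis using g1 by linarith
  next
    case False
    then have "w^2 \<le> \<sigma>^2" using e0 by (intro power_mono) (auto simp: w_def)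
    moreover have "e \<le> w \<or> w = 1" by (auto simp: w_def)
    moreover have "\<sigma> - \<sigma>^2/2 \<le> 1/2"
    proof -
      have "(\<sigma> - 1)^2 \<ge> 0" by simp
      then show ?thesis by (simp add: power2_eq_square algebra_simps)
    qed
    ultimately show ?thesis using g1 g2 by auto
  qed
  then show ?thesis unfolding e2_def w_def e_def h_def .
qed

lemma final_step:
  fixes K k0 a b c w e' :: real
  assumes K: "K \<ge> k0" "k0 \<ge> 4" and a: "a = k0 / K" and b: "0 \<le> b" "b \<le> 1"
    and c: "c \<ge> b * (K - 2) / K" and w: "0 \<le> w" "w \<le> 1" "w \<le> a + b"
    and e: "e' \<le> w - w^2/2 + b^2/6"
  shows "e' \<le> k0 / (K + 1) + c"
proof -
  have Kp: "K > 0" using K by linarith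
  have a1: "k0 / (K + 1) = a - k0 / (K * (K + 1))"
  proof -
    have "a - k0 / (K * (K + 1)) = k0 * (K + 1) / (K * (K + 1)) - k0 / (K * (K + 1))"
      unfolding a using Kp by simp
    also have "\<dots> = (k0 * K) / (K * (K + 1))" by (simp add: diff_divide_distrib[symmetric] algebra_simps)
    also have "\<dots> = k0 / (K + 1)" using Kp by simp
    finally show ?thesis by simp
  qed
  have c1: "c \<ge> b - 2 * b / K" using c Kp by (simp add: field_simps)
  show ?thesis
  proof (cases "a + b \<le> 1")
    case True
    have "w - w^2/2 \<le> (a+b) - (a+b)^2/2" using True w by (intro phi_mono) auto
    moreover have "a^2/2 \<ge> k0 / (K * (K + 1))"
    proof -
      have q: "k0 / (K * K) \<ge> 0" using Kp K by simp
      have "a^2/2 = (k0 / (K * K)) * (k0 / 2)" unfolding a by (simp add: power2_eq_square)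
      moreover have "(k0 / (K * K)) * (k0 / 2) \<ge> (k0 / (K * K)) * 1"
        using q K by (intro mult_left_mono) auto
      moreover have "k0 / (K * (K + 1)) \<le> k0 / (K * K)"
        using Kp K by (intro divide_left_mono) auto
      ultimately show ?thesis by simp
    qed
    moreover have "a * b \<ge> 2 * b / K"
    proof -
      have "a * b = k0 * b / K" unfolding a by simp
      moreover have "k0 * b \<ge> 2 * b" using K b by (intro mult_right_mono) auto
      ultimately show ?thesis using Kp by (simp add: divide_right_mono)
    qed
    moreover have "b^2 \<ge> 0" by simp
    moreover have "(a+b)^2 = a^2 + 2*(a*b) + b^2" by (simp add: power2_eq_square algebra_simps)
    ultimately show ?thesis using e a1 c1 by linarith
  next
    case False
    have bb: "b^2 \<le> b" using b by (simp add: power2_eq_square mult_left_le)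
    have w1: "w - w^2/2 \<le> 1/2"
    proof -
      have "(w - 1)^2 \<ge> 0" by simp
      then show ?thesis by (simp add: power2_eq_square algebra_simps)
    qed
    have ak: "k0 / (K + 1) = a * (K / (K + 1))" unfolding a using Kp by (simp add: field_simps)
    have kk: "K / (K + 1) \<ge> 4/5" using Kp K by (simp add: field_simps)
    have cb: "c \<ge> b * ((K - 2) / K)" using c by simp
    show ?thesis
    proof (cases "K \<ge> 6")
      case True
      have "(K - 2) / K \<ge> 2/3" using True by (simp add: field_simps)
      then have "c \<ge> b * (2/3)" using cb b by (meson mult_left_mono order_trans)
      moreover have "a * (K / (K + 1)) \<ge> a * (4/5)" using kk a Kp K by (intro mult_left_mono) auto
      moreover have "a \<ge> 0" unfolding a using K Kp by simp
      ultimately show ?thesis using e w1 bb ak False by linarith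
    next
      case False
      have "a \<ge> 2/3" unfolding a using False K Kp by (simp add: field_simps)
      moreover have "a * (K / (K + 1)) \<ge> a * (4/5)" using kk a Kp K by (intro mult_left_mono) auto
      moreover have "(K - 2) / K \<ge> 1/2" using K Kp by (simp add: field_simps)
      then have "c \<ge> b * (1/2)" using cb b by (meson mult_left_mono order_trans)
      ultimately show ?thesis using e w1 bb ak b by linarith
    qed
  qed
qed


lemma step_lower:
  fixes A :: "real^'n^'m" and f :: "real^'n \<Rightarrow> real"
  assumes fc: "convex_on UNIV f" and fd: "\<And>z. f differentiable (at z)"
    and gp: "\<And>z. g z \<noteq> -\<infinity>" and gx: "g xh = ereal Gx"
    and st: "\<And>z. ereal (inner (grad (fhat f A b \<beta> lam) xh) (xh - z)) + g xh - g z \<le> ereal \<eta>"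
    and lp: "lp = lam + \<beta> *\<^sub>R (A *v xh - b)"
  shows "AL f g A b \<beta> mu z \<ge> ereal (f xh + Gx + inner lp (A *v xh - b) - \<eta>
            + inner (mu - lp) (A *v z - b) + \<beta>/2 * (norm (A *v z - b))^2)"
proof (cases "g z = \<infinity>")
  case True
  then show ?thesis by (simp add: AL_def)
next
  case False
  with gp obtain Gz where gz: "g z = ereal Gz" by (cases "g z") auto
  define Df where "Df = grad f xh"
  have gdf: "GDERIV f xh :> Df" unfolding Df_def by (rule gderiv_grad[OF fd])
  have gr: "grad (fhat f A b \<beta> lam) xh = Df + lp v* A"
    unfolding lp by (rule grad_eq[OF fhat_gderiv[OF gdf]])
  have i1: "inner (Df + lp v* A) (xh - z) = inner Df (xh - z) + inner lp (A *v xh - b) - inner lp (A *v z - b)"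
    by (simp add: inner_add_left dot_lmul_matrix matrix_vector_mult_diff_distrib inner_diff_right)
  have s1: "inner Df (xh - z) + inner lp (A *v xh - b) - inner lp (A *v z - b) + Gx - Gz \<le> \<eta>"
    using st[of z] unfolding gr gx gz i1 by simp
  have cvx: "f z \<ge> f xh + inner Df (z - xh)" by (rule convex_grad_ineq[OF fc gdf])
  have i2: "inner Df (z - xh) = - inner Df (xh - z)" by (simp add: inner_diff_right)
  have "AL f g A b \<beta> mu z = ereal (f z + inner mu (A *v z - b) + \<beta> / 2 * (norm (A *v z - b))^2 + Gz)"
    by (simp add: AL_def fhat_def gz)
  moreover have "f z + inner mu (A *v z - b) + \<beta> / 2 * (norm (A *v z - b))^2 + Gz \<ge>
     f xh + Gx + inner lp (A *v xh - b) - \<eta> + inner (mu - lp) (A *v z - b) + \<beta>/2 * (norm (A *v z - b))^2"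
    using s1 cvx i2 by (simp add: inner_diff_left)
  ultimately show ?thesis by simp
qed

lemma quad_lower:
  fixes u r :: "'a::real_inner" assumes "\<beta> > 0"
  shows "inner u r + \<beta>/2 * (norm r)^2 \<ge> -((norm u)^2 / (2 * \<beta>))"
proof -
  have "0 \<le> (norm (\<beta> *\<^sub>R r + u))^2" by simp
  also have "\<dots> = inner (\<beta> *\<^sub>R r + u) (\<beta> *\<^sub>R r + u)" by (simp only: power2_norm_eq_inner)
  also have "\<dots> = \<beta>^2 * inner r r + 2 * \<beta> * inner u r + inner u u"
    by (simp add: inner_add_left inner_add_right inner_commute[of r u] power2_eq_square algebra_simps)
  also have "\<dots> = \<beta>^2 * (norm r)^2 + 2 * \<beta> * inner u r + (norm u)^2"
    by (simp only: power2_norm_eq_inner)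
  finally have "0 \<le> \<beta>^2 * (norm r)^2 + 2 * \<beta> * inner u r + (norm u)^2" .
  then have "0 \<le> (\<beta>^2 * (norm r)^2 + 2 * \<beta> * inner u r + (norm u)^2) / (2 * \<beta>)" using assms by simp
  also have "\<dots> = inner u r + \<beta>/2 * (norm r)^2 + (norm u)^2 / (2 * \<beta>)"
    using assms by (simp add: field_simps power2_eq_square)
  finally show ?thesis by simp
qed

lemma dual_bounds:
  fixes F :: "'a \<Rightarrow> ereal"
  assumes lo: "\<And>z. F z \<ge> ereal C" and fx: "F x = ereal v"
  shows "C \<le> real_of_ereal (INF z. F z)" "real_of_ereal (INF z. F z) \<le> v"
proof -
  have "(INF z. F z) \<ge> ereal C" using lo by (rule INF_greatest)
  moreover have "(INF z. F z) \<le> ereal v" using fx by (metis INF_lower UNIV_I)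
  ultimately obtain t where t: "(INF z. F z) = ereal t" "C \<le> t" "t \<le> v"
    by (cases "(INF z. F z)") auto
  then show "C \<le> real_of_ereal (INF z. F z)" "real_of_ereal (INF z. F z) \<le> v" by auto
qed


theorem theorem2:
  fixes A :: "real^'n^'m" and b :: "real^'m"
    and f :: "real^'n \<Rightarrow> real" and g :: "real^'n \<Rightarrow> ereal"
    and \<beta> :: real
    and x :: "nat \<Rightarrow> real^'n" and lam :: "nat \<Rightarrow> real^'m" and \<eta> :: "nat \<Rightarrow> real"
    and lamstar :: "real^'m" and k0 :: nat
  assumes f_convex: "convex_on UNIV f"
    and f_diff: "\<And>z. f differentiable (at z)"
    and f_lip: "\<exists>L. \<forall>y z. norm (grad f y - grad f z) \<le> L * norm (y - z)"
    and g_proper: "proper_fun g" and g_convex: "convex_fun g" and g_closed: "closed_fun g"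
    and g_bdd: "bounded (dom_e g)"
    and beta_pos: "\<beta> > 0"
    and lamstar_opt: "\<And>l. dualf f g A b \<beta> l \<le> dualf f g A b \<beta> lamstar"
    and x1: "x 1 \<in> dom_e g"
    and eta_pos: "\<And>k. k \<ge> 1 \<Longrightarrow> \<eta> k > 0"
    and eta_noninc: "\<And>k. k \<ge> 1 \<Longrightarrow> \<eta> (Suc k) \<le> \<eta> k"
    and eta_sum: "summable (\<lambda>k. \<eta> (Suc k))"
    and x_step_dom: "\<And>k. k \<ge> 1 \<Longrightarrow> x (Suc k) \<in> dom_e g"
    and x_step: "\<And>k z. k \<ge> 1 \<Longrightarrow>
        ereal (inner (grad (fhat f A b \<beta> (lam k)) (x (Suc k))) (x (Suc k) - z))
          + g (x (Suc k)) - g z \<le> ereal (\<eta> k)"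
    and lam_step: "\<And>k. k \<ge> 1 \<Longrightarrow> lam (Suc k) = lam k + \<beta> *\<^sub>R (A *v x (Suc k) - b)"
    and k0_ge: "k0 \<ge> 4"
    and k0_delta: "\<And>k. k \<ge> k0 \<Longrightarrow>
        dualf f g A b \<beta> lamstar - dualf f g A b \<beta> (lam k)
          \<le> 1 / (2 * (\<beta> / (4 * (sqrt ((norm (lam 1 - lamstar))\<^sup>2 + 2 * \<beta> * (\<Sum>k. \<eta> (Suc k))))\<^sup>2)))"
    and k0_eta: "\<And>k. k \<ge> k0 \<Longrightarrow>
        \<eta> k \<le> 1 / (24 * (\<beta> / (4 * (sqrt ((norm (lam 1 - lamstar))\<^sup>2 + 2 * \<beta> * (\<Sum>k. \<eta> (Suc k))))\<^sup>2)))"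
    and eta_ratio: "\<And>k. k \<ge> k0 \<Longrightarrow> sqrt (\<eta> (Suc k) / \<eta> k) \<ge> (real k - 2) / real k"
  shows "\<forall>k\<ge>k0.
    (let B = sqrt ((norm (lam 1 - lamstar))\<^sup>2 + 2 * \<beta> * (\<Sum>k. \<eta> (Suc k)));
         \<theta> = \<beta> / (4 * B\<^sup>2);
         \<tau>1 = real k0 / (4 * \<theta>);
         \<tau>2 = 1 / (4 * \<theta> * sqrt (\<eta> k0))
     in dualf f g A b \<beta> lamstar - dualf f g A b \<beta> (lam k) \<le> \<tau>1 / real k + \<tau>2 * sqrt (\<eta> k))"
proof -
  define d where "d = dualf f g A b \<beta>"
  define S where "S = (\<Sum>k. \<eta> (Suc k))"
  define B where "B = sqrt ((norm (lam 1 - lamstar))\<^sup>2 + 2 * \<beta> * S)"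
  define \<theta> where "\<theta> = \<beta> / (4 * B\<^sup>2)"
  define \<delta> where "\<delta> k = d lamstar - d (lam k)" for k
  define r where "r k = A *v x (Suc k) - b" for k
  define G where "G k = real_of_ereal (g (x k))" for k
  define P where "P k = f (x (Suc k)) + G (Suc k)" for k
  have gp: "\<And>z. g z \<noteq> -\<infinity>" using g_proper by (auto simp: proper_fun_def)
  have gx: "g (x (Suc k)) = ereal (G (Suc k))" if "k \<ge> 1" for k
    using x_step_dom[OF that] gp[of "x (Suc k)"] unfolding G_def dom_e_def by (cases "g (x (Suc k))") auto
  have lamS: "lam (Suc k) = lam k + \<beta> *\<^sub>R r k" if "k \<ge> 1" for k
    using lam_step[OF that] by (simp add: r_def)
  have lowb: "AL f g A b \<beta> mu z \<ge> ereal (P k + inner (lam (Suc k)) (r k) - \<eta> k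
      - (norm (mu - lam (Suc k)))^2 / (2 * \<beta>))" if "k \<ge> 1" for k mu z
  proof -
    have "AL f g A b \<beta> mu z \<ge> ereal (f (x (Suc k)) + G (Suc k) + inner (lam (Suc k)) (A *v x (Suc k) - b) - \<eta> k
            + inner (mu - lam (Suc k)) (A *v z - b) + \<beta>/2 * (norm (A *v z - b))^2)"
      by (rule step_lower[OF f_convex f_diff gp gx[OF that] x_step[OF that] lam_step[OF that]])
    moreover have "inner (mu - lam (Suc k)) (A *v z - b) + \<beta>/2 * (norm (A *v z - b))^2
        \<ge> -((norm (mu - lam (Suc k)))^2 / (2 * \<beta>))" by (rule quad_lower[OF beta_pos])
    ultimately show ?thesis unfolding P_def r_def
      by (elim order_trans[rotated]) simp
  qed
  have ALx: "AL f g A b \<beta> mu (x (Suc k)) = ereal (P k + inner mu (r k) + \<beta>/2 * (norm (r k))^2)"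
    if "k \<ge> 1" for k mu
    using gx[OF that] by (simp add: AL_def fhat_def P_def r_def)
  have dup: "d mu \<le> P k + inner mu (r k) + \<beta>/2 * (norm (r k))^2" if "k \<ge> 1" for k mu
  proof -
    have l1: "\<And>z. ereal (P 1 + inner (lam (Suc 1)) (r 1) - \<eta> 1 - (norm (mu - lam (Suc 1)))^2 / (2 * \<beta>))
        \<le> AL f g A b \<beta> mu z" using lowb[of 1 mu] by simp
    show ?thesis
      unfolding d_def dualf_def by (rule dual_bounds(2)[where F="AL f g A b \<beta> mu", OF l1 ALx[OF that]])
  qed
  have dlow: "d (lam (Suc k)) \<ge> P k + inner (lam (Suc k)) (r k) - \<eta> k" if "k \<ge> 1" for k
  proof -
    have "P k + inner (lam (Suc k)) (r k) - \<eta> k - (norm (lam (Suc k) - lam (Suc k)))^2 / (2 * \<beta>)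
       \<le> d (lam (Suc k))"
      unfolding d_def dualf_def
      by (rule dual_bounds(1)[where F="AL f g A b \<beta> (lam (Suc k))", OF lowb[OF that] ALx[OF that]])
    then show ?thesis by simp
  qed
  have dpos: "\<delta> k \<ge> 0" for k unfolding \<delta>_def d_def using lamstar_opt by simp
  have E1: "\<delta> (Suc k) \<le> inner (lamstar - lam k) (r k) - \<beta>/2 * (norm (r k))^2 + \<eta> k" if "k \<ge> 1" for k
  proof -
    have "inner (lam (Suc k)) (r k) = inner (lam k) (r k) + \<beta> * (norm (r k))^2"
      using lamS[OF that] by (simp add: inner_add_left power2_norm_eq_inner)
    then show ?thesis using dup[OF that, of lamstar] dlow[OF that] unfolding \<delta>_def
      by (simp add: inner_diff_left)
  qed
  have E2: "\<delta> (Suc k) \<le> \<delta> k - \<beta>/2 * (norm (r k))^2 + \<eta> k" if "k \<ge> 1" for k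
  proof -
    have "inner (lam (Suc k)) (r k) = inner (lam k) (r k) + \<beta> * (norm (r k))^2"
      using lamS[OF that] by (simp add: inner_add_left power2_norm_eq_inner)
    then show ?thesis using dup[OF that, of "lam k"] dlow[OF that] unfolding \<delta>_def
      by simp
  qed
  have sqexp: "(norm (u + c *\<^sub>R v))^2 = (norm u)^2 + 2 * c * inner u v + c^2 * (norm v)^2"
    for u v :: "real^'m" and c :: real
  proof -
    have "(norm (u + c *\<^sub>R v))^2 = inner (u + c *\<^sub>R v) (u + c *\<^sub>R v)" by (simp only: power2_norm_eq_inner)
    also have "\<dots> = inner u u + 2 * c * inner u v + c^2 * inner v v"
      by (simp add: inner_add_left inner_add_right inner_commute[of v u] power2_eq_square algebra_simps)
    also have "\<dots> = (norm u)^2 + 2 * c * inner u v + c^2 * (norm v)^2" by (simp only: power2_norm_eq_inner)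
    finally show ?thesis .
  qed
  have NR: "(norm (lam (Suc k) - lamstar))^2 \<le> (norm (lam k - lamstar))^2 + 2 * \<beta> * \<eta> k" if "k \<ge> 1" for k
  proof -
    have "(norm (lam (Suc k) - lamstar))^2 = (norm ((lam k - lamstar) + \<beta> *\<^sub>R r k))^2"
      using lamS[OF that] by (simp add: algebra_simps)
    also have "\<dots> = (norm (lam k - lamstar))^2 + 2 * \<beta> * inner (lam k - lamstar) (r k) + \<beta>^2 * (norm (r k))^2"
      by (rule sqexp)
    finally have eq: "(norm (lam (Suc k) - lamstar))^2 = (norm (lam k - lamstar))^2 + 2 * \<beta> * inner (lam k - lamstar) (r k) + \<beta>^2 * (norm (r k))^2" .
    have "inner (lamstar - lam k) (r k) \<ge> \<beta>/2 * (norm (r k))^2 - \<eta> k"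
      using E1[OF that] dpos[of "Suc k"] by linarith
    then have "2 * \<beta> * inner (lam k - lamstar) (r k) \<le> 2 * \<beta> * (\<eta> k - \<beta>/2 * (norm (r k))^2)"
      using beta_pos by (intro mult_left_mono) (auto simp: inner_diff_left)
    then show ?thesis unfolding eq by (simp add: power2_eq_square algebra_simps)
  qed
  have NR2: "(norm (lam (Suc n) - lamstar))^2 \<le> (norm (lam 1 - lamstar))^2 + 2 * \<beta> * (\<Sum>i<n. \<eta> (Suc i))" for n
  proof (induction n)
    case 0 then show ?case by simp
  next
    case (Suc n)
    then show ?case using NR[of "Suc n"] by (simp add: distrib_left)
  qed
  have eta_nn: "\<eta> (Suc i) \<ge> 0" for i using eta_pos[of "Suc i"] by simp
  have psum: "(\<Sum>i<n. \<eta> (Suc i)) \<le> S" for n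
    unfolding S_def by (rule sum_le_suminf[OF eta_sum]) (auto simp: eta_nn)
  have S1: "S \<ge> \<eta> 1" using psum[of 1] by simp
  have Spos: "S > 0" using S1 eta_pos[of 1] by simp
  have nnB: "0 \<le> (norm (lam 1 - lamstar))\<^sup>2 + 2 * \<beta> * S"
    using Spos beta_pos by (intro add_nonneg_nonneg) auto
  have B2: "B^2 = (norm (lam 1 - lamstar))\<^sup>2 + 2 * \<beta> * S" unfolding B_def
    using nnB by (rule real_sqrt_pow2)
  have B2pos: "B^2 > 0" unfolding B2 using Spos beta_pos by (intro add_nonneg_pos) auto
  have B0: "B \<ge> 0" unfolding B_def using nnB by simp
  have Bpos: "B > 0" using B0 B2pos by (cases "B = 0") auto
  have Nb: "norm (lam k - lamstar) \<le> B" if "k \<ge> 1" for k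
  proof -
    define n where "n = k - 1"
    have n: "k = Suc n" using that unfolding n_def by simp
    have "2 * \<beta> * (\<Sum>i<n. \<eta> (Suc i)) \<le> 2 * \<beta> * S"
      using psum[of n] beta_pos by (intro mult_left_mono) auto
    then have "(norm (lam k - lamstar))^2 \<le> B^2" unfolding B2 n
      using NR2[of n] by linarith
    then show ?thesis using B0 by (rule power2_le_imp_le)
  qed
  have E1B: "\<delta> (Suc k) \<le> B * norm (r k) - \<beta>/2 * (norm (r k))^2 + \<eta> k" if "k \<ge> 1" for k
  proof -
    have "inner (lamstar - lam k) (r k) \<le> norm (lamstar - lam k) * norm (r k)" by (rule norm_cauchy_schwarz)
    also have "\<dots> \<le> B * norm (r k)" using Nb[OF that] by (simp add: norm_minus_commute mult_right_mono)
    finally show ?thesis using E1[OF that] by linarith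
  qed
  define e where "e k = \<beta> * \<delta> k / B^2" for k
  have REC: "e (Suc k) \<le> min (e k) 1 - (min (e k) 1)^2 / 2 + \<beta> * \<eta> k / B^2" if "k \<ge> 1" for k
    unfolding e_def by (rule rec_step[OF beta_pos Bpos norm_ge_zero dpos E1B[OF that] E2[OF that]])
  have thpos: "\<theta> > 0" unfolding \<theta>_def using beta_pos B2pos by simp
  have e4: "e k = 4 * \<theta> * \<delta> k" for k unfolding e_def \<theta>_def using B2pos by simp
  have k01: "k0 \<ge> 1" using k0_ge by simp
  have etak0: "\<eta> k0 > 0" using eta_pos k01 by simp
  have eta0: "\<eta> k0 \<le> 1 / (24 * \<theta>)" using k0_eta[of k0] unfolding S_def[symmetric] B_def[symmetric] \<theta>_def[symmetric] by simp
  have emono: "\<eta> k \<le> \<eta> k0" if "k \<ge> k0" for k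
    using that
  proof (induction k rule: dec_induct)
    case base then show ?case by simp
  next
    case (step k) then show ?case using eta_noninc[of k] k01 by simp
  qed
  have hle: "\<beta> * \<eta> k / B^2 \<le> (\<eta> k / \<eta> k0) / 6" if "k \<ge> k0" for k
  proof -
    have "\<beta> * \<eta> k / B^2 = 4 * \<theta> * \<eta> k0 * (\<eta> k / \<eta> k0)"
      unfolding \<theta>_def using etak0 B2pos by simp
    also have "\<dots> \<le> 4 * \<theta> * (1 / (24 * \<theta>)) * (\<eta> k / \<eta> k0)"
      using eta0 thpos etak0 eta_pos[of k] that k01 by (intro mult_right_mono mult_left_mono) auto
    also have "\<dots> = (\<eta> k / \<eta> k0) / 6" using thpos by simp
    finally show ?thesis .
  qed
  have MAIN: "e k \<le> real k0 / real k + sqrt (\<eta> k / \<eta> k0)" if "k \<ge> k0" for k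
    using that
  proof (induction k rule: dec_induct)
    case base
    have "\<delta> k0 \<le> 1 / (2 * \<theta>)" using k0_delta[of k0]
      unfolding S_def[symmetric] B_def[symmetric] \<theta>_def[symmetric] \<delta>_def d_def by simp
    then have "e k0 \<le> 4 * \<theta> * (1 / (2 * \<theta>))" unfolding e4 using thpos by (intro mult_left_mono) auto
    then show ?case using thpos k0_ge etak0 by simp
  next
    case (step k)
    have k1: "k \<ge> 1" using step k01 by simp
    have kpos: "real k > 0" using k1 by simp
    define bb where "bb = sqrt (\<eta> k / \<eta> k0)"
    define cc where "cc = sqrt (\<eta> (Suc k) / \<eta> k0)"
    have ek: "\<eta> k > 0" using eta_pos k1 by simp
    have bb0: "bb \<ge> 0" unfolding bb_def using ek etak0 by simp
    have bb1: "bb \<le> 1" unfolding bb_def using emono[OF step(1)] etak0 by simp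
    have bb2: "bb^2 = \<eta> k / \<eta> k0" unfolding bb_def using ek etak0 by simp
    have cceq: "cc = sqrt (\<eta> (Suc k) / \<eta> k) * bb" unfolding cc_def bb_def
      using ek etak0 by (simp add: real_sqrt_mult[symmetric])
    then have cc: "cc \<ge> bb * (real k - 2) / real k"
    proof -
      have "bb * ((real k - 2) / real k) \<le> bb * sqrt (\<eta> (Suc k) / \<eta> k)"
        using eta_ratio[OF step(1)] bb0 by (rule mult_left_mono)
      then show ?thesis using cceq by (simp add: mult.commute)
    qed
    have w0: "0 \<le> min (e k) 1" using dpos[of k] thpos unfolding e4 by simp
    have ew: "e (Suc k) \<le> min (e k) 1 - (min (e k) 1)^2/2 + bb^2/6"
      using REC[OF k1] hle[OF step(1)] unfolding bb2 by simp
    have "e (Suc k) \<le> real k0 / (real k + 1) + cc"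
      by (rule final_step[where a = "real k0 / real k" and b = bb and w = "min (e k) 1"])
        (use step(1) k0_ge bb0 bb1 cc w0 step(3) ew in \<open>auto simp: bb_def\<close>)
    then show ?case by (simp add: cc_def add.commute)
  qed
  show ?thesis
  proof (intro allI impI)
    fix k assume k: "k0 \<le> k"
    have kpos: "real k > 0" using k k0_ge by simp
    have "4 * \<theta> * \<delta> k \<le> real k0 / real k + sqrt (\<eta> k) / sqrt (\<eta> k0)"
      using MAIN[OF k] unfolding e4 by (simp add: real_sqrt_divide)
    then have "\<delta> k \<le> (real k0 / real k + sqrt (\<eta> k) / sqrt (\<eta> k0)) / (4 * \<theta>)"
      using thpos by (simp add: field_simps)
    also have "\<dots> = real k0 / (4 * \<theta>) / real k + 1 / (4 * \<theta> * sqrt (\<eta> k0)) * sqrt (\<eta> k)"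
      using thpos kpos etak0 by (simp add: field_simps)
    finally show "let B = sqrt ((norm (lam 1 - lamstar))\<^sup>2 + 2 * \<beta> * (\<Sum>k. \<eta> (Suc k)));
         \<theta> = \<beta> / (4 * B\<^sup>2);
         \<tau>1 = real k0 / (4 * \<theta>);
         \<tau>2 = 1 / (4 * \<theta> * sqrt (\<eta> k0))
     in dualf f g A b \<beta> lamstar - dualf f g A b \<beta> (lam k) \<le> \<tau>1 / real k + \<tau>2 * sqrt (\<eta> k)"
      unfolding Let_def S_def[symmetric] B_def[symmetric] \<theta>_def[symmetric] \<delta>_def d_def by simp
  qed
qed

end
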